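(* Let $D$ be a rank two filtered $(\varphi,N,L/K,E)$-module and let $\underline\eta$ be a standard basis of $D$ (chosen as in Corollary 2.6 when $N\neq0$). Then: (1) If $D$ is F-semisimple and not F-scalar: (a) if $N\neq0$, there is a character $\chi:G\to E^\times$ with $[g]_{\underline\eta}=\mathrm{diag}(\chi(g)\cdot\vec1,\chi(g)\cdot\vec1)$ for all $g\in G$; (b) if $N=0$, there are characters $\chi,\psi:G\to E^\times$ with $[g]_{\underline\eta}=\mathrm{diag}(\chi(g)\cdot\vec1,\psi(g)\cdot\vec1)$ for all $g\in G$. (2) If $D$ is F-scalar, there is a group homomorphism $\lambda:G\to GL_2(E)$ with $[g]_{\underline\eta}=\lambda(g)\cdot\mathrm{diag}(\vec1,\vec1)$ for all $g\in G$ (i.e. the $(r,s)$ entry of $[g]_{\underline\eta}$ is $\lambda(g)_{rs}\cdot\vec1$). (3) If $D$ is non-F-semisimple, there is a character $\chi:G\to E^\times$ with $[g]_{\underline\eta}=\mathrm{diag}(\chi(g)\cdot\vec1,\chi(g)\cdot\vec1)$ for all $g\in G$.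
   Context: $p$ prime; $K/\mathbb{Q}_p$ finite; $L/K$ finite Galois with $G=\mathrm{Gal}(L/K)$; $L_0$ the maximal unramified subextension of $L/\mathbb{Q}_p$, $f=[L_0:\mathbb{Q}_p]$, $\tau$ the absolute Frobenius of $L_0$; $E$ a finite extension of $\mathbb{Q}_p$ containing the images of all embeddings of $L$. Fix $\iota:L_0\hookrightarrow E$ and $\tau_j=\iota\circ\tau^j$; then $L_0\otimes_{\mathbb{Q}_p}E\cong E^f$ via $x\otimes y\mapsto(\tau_j(x)y)_j$, and $\tau\otimes1$ becomes $\varphi(x_0,\dots,x_{f-1})=(x_1,\dots,x_{f-1},x_0)$. For $g\in G$ let $n(g)\in\{0,\dots,f-1\}$ with $g|_{L_0}=\tau^{n(g)}$; $G$ acts on $E^f$ by $g(a_0,\dots,a_{f-1})=(a_{n(g)},a_{n(g)+1},\dots,a_{n(g)+f-1})$ (indices mod $f$). A rank two filtered $(\varphi,N,L/K,E)$-module is a free $E^f$-module $D$ of rank 2 with: an additive bijection $\varphi$ with $\varphi(ad)=\varphi(a)\varphi(d)$; a nilpotent $E^f$-linear $N$ with $N\varphi=p\varphi N$; a decreasing exhaustive separated filtration on $D_L=L\otimes_{L_0}D$; and an $E$-linear action of $G$ on $D$ with $g(ad)=g(a)g(d)$, commuting with $\varphi$ and $N$ and (after extension to $D_L$) preserving the filtration. Matrices: $(T\eta_1,T\eta_2)=(\eta_1,\eta_2)[T]_{\underline\eta}$. $D$ is F-semisimple / F-scalar / non-F-semisimple according as the $E^f$-linear map $\varphi^f$ is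 semisimple / a scalar in $E^\times$ / not semisimple. A standard basis is one in which $[\varphi]$ is $\mathrm{diag}(\alpha\cdot\vec1,\delta\cdot\vec1)$ with $\alpha^f\ne\delta^f$, or $\mathrm{diag}(\alpha\cdot\vec1,\alpha\cdot\vec1)$, or $\begin{pmatrix}\alpha\cdot\vec1&\vec0\\ \vec1&\alpha\cdot\vec1\end{pmatrix}$ ($\alpha,\delta\in E^\times$); when $N\ne0$ it is moreover chosen with $[\varphi]=\mathrm{diag}(p\delta\cdot\vec1,\delta\cdot\vec1)$ and $[N]=\begin{pmatrix}\vec0&\vec0\\ \vec1&\vec0\end{pmatrix}$. $c\cdot\vec1=(c,\dots,c)$. *)

theory Defs
  imports "HOL-Algebra.Group" "HOL-Computational_Algebra.Polynomial" "HOL-Computational_Algebra.Squarefree"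
begin

text \<open>The ring E^f is modelled as f-periodic sequences nat => E
  (component j of (a_0,...,a_{f-1}) is a (j mod f)).  The rank two free E^f-module D
  with basis eta = (eta1, eta2) is modelled by its coordinates: pairs of elements of E^f.\<close>

type_synonym 'e ef = "nat \<Rightarrow> 'e"
type_synonym 'e dm = "'e ef \<times> 'e ef"

definition Ef :: "nat \<Rightarrow> 'e ef set" where
  "Ef f = {a. \<forall>j. a (j + f) = a j}"

definition Dm :: "nat \<Rightarrow> 'e dm set" where
  "Dm f = Ef f \<times> Ef f"

text \<open>shift k (a_0,...,a_{f-1}) = (a_k, a_{k+1}, ..., a_{k+f-1}); the Frobenius on E^f
  is shift 1, and g in G acts on E^f by shift (n g).\<close>
definition shift :: "nat \<Rightarrow> 'e ef \<Rightarrow> 'e ef" where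
  "shift k a = (\<lambda>j. a (j + k))"

definition cvec :: "'e \<Rightarrow> 'e ef" where
  "cvec c = (\<lambda>j. c)"

definition add_d :: "'e::plus dm \<Rightarrow> 'e dm \<Rightarrow> 'e dm" where
  "add_d d d' = ((\<lambda>j. fst d j + fst d' j), (\<lambda>j. snd d j + snd d' j))"

definition smult_d :: "'e::times ef \<Rightarrow> 'e dm \<Rightarrow> 'e dm" where
  "smult_d a d = ((\<lambda>j. a j * fst d j), (\<lambda>j. a j * snd d j))"

definition zero_d :: "'e::zero dm" where
  "zero_d = (cvec 0, cvec 0)"

definition eta1 :: "'e::{zero,one} dm" where "eta1 = (cvec 1, cvec 0)"
definition eta2 :: "'e::{zero,one} dm" where "eta2 = (cvec 0, cvec 1)"

text \<open>Matrix [T] w.r.t. eta: (T eta1, T eta2) = (eta1, eta2) [T], indices r,s in {1,2};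
  entries are elements of E^f.\<close>
definition matr :: "('e::{zero,one} dm \<Rightarrow> 'e dm) \<Rightarrow> nat \<Rightarrow> nat \<Rightarrow> 'e ef" where
  "matr T r s = (if r \<in> {1,2} \<and> s \<in> {1,2}
      then (if r = 1 then fst else snd) (T (if s = 1 then eta1 else eta2))
      else cvec 0)"

definition mat2 :: "'e::zero ef \<Rightarrow> 'e ef \<Rightarrow> 'e ef \<Rightarrow> 'e ef \<Rightarrow> nat \<Rightarrow> nat \<Rightarrow> 'e ef" where
  "mat2 a b c d r s = (if r = 1 \<and> s = 1 then a else if r = 1 \<and> s = 2 then b
      else if r = 2 \<and> s = 1 then c else if r = 2 \<and> s = 2 then d else cvec 0)"

definition phiN_mod :: "nat \<Rightarrow> nat \<Rightarrow> ('g, 'b) monoid_scheme \<Rightarrow> ('g \<Rightarrow> nat)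
    \<Rightarrow> ('e::field dm \<Rightarrow> 'e dm) \<Rightarrow> ('e dm \<Rightarrow> 'e dm) \<Rightarrow> ('g \<Rightarrow> 'e dm \<Rightarrow> 'e dm) \<Rightarrow> bool" where
  "phiN_mod p f G n Phi N act \<longleftrightarrow>
     f \<ge> 1 \<and> group G \<and> finite (carrier G) \<and>
     \<comment> \<open>phi: additive bijection, semilinear w.r.t. the Frobenius of E^f\<close>
     bij_betw Phi (Dm f) (Dm f) \<and>
     (\<forall>d\<in>Dm f. \<forall>d'\<in>Dm f. Phi (add_d d d') = add_d (Phi d) (Phi d')) \<and>
     (\<forall>a\<in>Ef f. \<forall>d\<in>Dm f. Phi (smult_d a d) = smult_d (shift 1 a) (Phi d)) \<and>
     \<comment> \<open>N: nilpotent E^f-linear, N phi = p phi N\<close>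
     N ` Dm f \<subseteq> Dm f \<and>
     (\<forall>d\<in>Dm f. \<forall>d'\<in>Dm f. N (add_d d d') = add_d (N d) (N d')) \<and>
     (\<forall>a\<in>Ef f. \<forall>d\<in>Dm f. N (smult_d a d) = smult_d a (N d)) \<and>
     (\<exists>k. \<forall>d\<in>Dm f. (N ^^ k) d = zero_d) \<and>
     (\<forall>d\<in>Dm f. N (Phi d) = smult_d (cvec (of_nat p)) (Phi (N d))) \<and>
     \<comment> \<open>g restricted to L_0 is tau^(n g)\<close>
     (\<forall>g\<in>carrier G. n g < f) \<and>
     (\<forall>g\<in>carrier G. \<forall>h\<in>carrier G. n (g \<otimes>\<^bsub>G\<^esub> h) = (n g + n h) mod f) \<and>
     \<comment> \<open>E-linear, semilinear action of G commuting with phi and N\<close>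
     (\<forall>g\<in>carrier G.
        act g ` Dm f \<subseteq> Dm f \<and>
        (\<forall>d\<in>Dm f. \<forall>d'\<in>Dm f. act g (add_d d d') = add_d (act g d) (act g d')) \<and>
        (\<forall>c. \<forall>d\<in>Dm f. act g (smult_d (cvec c) d) = smult_d (cvec c) (act g d)) \<and>
        (\<forall>a\<in>Ef f. \<forall>d\<in>Dm f. act g (smult_d a d) = smult_d (shift (n g) a) (act g d)) \<and>
        (\<forall>d\<in>Dm f. act g (Phi d) = Phi (act g d)) \<and>
        (\<forall>d\<in>Dm f. act g (N d) = N (act g d))) \<and>
     (\<forall>d\<in>Dm f. act \<one>\<^bsub>G\<^esub> d = d) \<and>
     (\<forall>g\<in>carrier G. \<forall>h\<in>carrier G. \<forall>d\<in>Dm f. act (g \<otimes>\<^bsub>G\<^esub> h) d = act g (act h d))"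

definition N_nonzero :: "nat \<Rightarrow> ('e::zero dm \<Rightarrow> 'e dm) \<Rightarrow> bool" where
  "N_nonzero f N \<longleftrightarrow> (\<exists>d\<in>Dm f. N d \<noteq> zero_d)"

definition op_poly :: "'e::comm_ring_1 poly \<Rightarrow> ('e dm \<Rightarrow> 'e dm) \<Rightarrow> 'e dm \<Rightarrow> 'e dm" where
  "op_poly q T d = ((\<lambda>j. \<Sum>i\<le>degree q. coeff q i * fst ((T ^^ i) d) j),
                    (\<lambda>j. \<Sum>i\<le>degree q. coeff q i * snd ((T ^^ i) d) j))"

text \<open>phi^f semisimple: its minimal polynomial over E is squarefree, i.e. it is killed by
  a nonzero squarefree polynomial.\<close>
definition F_semisimple :: "nat \<Rightarrow> ('e::field dm \<Rightarrow> 'e dm) \<Rightarrow> bool" where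
  "F_semisimple f Phi \<longleftrightarrow>
     (\<exists>q::'e poly. q \<noteq> 0 \<and> squarefree q \<and> (\<forall>d\<in>Dm f. op_poly q (Phi ^^ f) d = zero_d))"

definition F_scalar :: "nat \<Rightarrow> ('e::field dm \<Rightarrow> 'e dm) \<Rightarrow> bool" where
  "F_scalar f Phi \<longleftrightarrow> (\<exists>c. c \<noteq> 0 \<and> (\<forall>d\<in>Dm f. (Phi ^^ f) d = smult_d (cvec c) d))"

definition std_basis :: "nat \<Rightarrow> nat \<Rightarrow> ('e::field dm \<Rightarrow> 'e dm) \<Rightarrow> ('e dm \<Rightarrow> 'e dm) \<Rightarrow> bool" where
  "std_basis p f Phi N \<longleftrightarrow>
     ((\<exists>\<alpha> \<delta>. \<alpha> \<noteq> 0 \<and> \<delta> \<noteq> 0 \<and> \<alpha> ^ f \<noteq> \<delta> ^ f \<and>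
          matr Phi = mat2 (cvec \<alpha>) (cvec 0) (cvec 0) (cvec \<delta>)) \<or>
      (\<exists>\<alpha>. \<alpha> \<noteq> 0 \<and> matr Phi = mat2 (cvec \<alpha>) (cvec 0) (cvec 0) (cvec \<alpha>)) \<or>
      (\<exists>\<alpha>. \<alpha> \<noteq> 0 \<and> matr Phi = mat2 (cvec \<alpha>) (cvec 0) (cvec 1) (cvec \<alpha>))) \<and>
     (N_nonzero f N \<longrightarrow>
        (\<exists>\<delta>. \<delta> \<noteq> 0 \<and> matr Phi = mat2 (cvec (of_nat p * \<delta>)) (cvec 0) (cvec 0) (cvec \<delta>) \<and>
              matr N = mat2 (cvec 0) (cvec 0) (cvec 1) (cvec 0)))"

definition is_character :: "('g, 'b) monoid_scheme \<Rightarrow> ('g \<Rightarrow> 'e::field) \<Rightarrow> bool" where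
  "is_character G \<chi> \<longleftrightarrow> (\<forall>g\<in>carrier G. \<chi> g \<noteq> 0) \<and>
     (\<forall>g\<in>carrier G. \<forall>h\<in>carrier G. \<chi> (g \<otimes>\<^bsub>G\<^esub> h) = \<chi> g * \<chi> h)"

definition is_GL2_hom :: "('g, 'b) monoid_scheme \<Rightarrow> ('g \<Rightarrow> nat \<Rightarrow> nat \<Rightarrow> 'e::field) \<Rightarrow> bool" where
  "is_GL2_hom G L \<longleftrightarrow>
     (\<forall>g\<in>carrier G. L g 1 1 * L g 2 2 - L g 1 2 * L g 2 1 \<noteq> 0) \<and>
     (\<forall>g\<in>carrier G. \<forall>h\<in>carrier G. \<forall>r\<in>{1,2}. \<forall>s\<in>{1,2}.
        L (g \<otimes>\<^bsub>G\<^esub> h) r s = (\<Sum>t\<in>{1,2}. L g r t * L h t s))"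

end

theory Submission imports Defs "HOL-Algebra.Multiplicative_Group" begin


lemma sq_dvd_pderiv:
  fixes x q :: "'a::field poly"
  assumes "x^2 dvd q" shows "x dvd q" "x dvd pderiv q"
proof -
  obtain k where k: "q = x^2 * k" using assms by blast
  show "x dvd q" using k by (simp add: power2_eq_square)
  have "pderiv q = x * (x * pderiv k) + x * (pderiv x * k) + x * (pderiv x * k)"
    unfolding k power2_eq_square by (simp add: pderiv_mult algebra_simps)
  thus "x dvd pderiv q" by simp
qed

lemma lin_sqf: "squarefree [:-a,1::'a::field:]"
proof (rule squarefreeI)
  fix x assume "x^2 dvd [:-a,1:]"
  hence "x dvd pderiv [:-a,1:]" by (rule sq_dvd_pderiv)
  thus "x dvd 1" by (simp add: pderiv_pCons one_pCons[symmetric])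
qed

lemma two_sqf:
  fixes a b :: "'a::field"
  assumes "a \<noteq> b"
  shows "squarefree ([:-a,1:] * [:-b,1:])"
proof (rule squarefreeI)
  fix x assume x: "x^2 dvd [:-a,1:] * [:-b,1:]"
  let ?q = "[:-a,1:] * [:-b,1:]"
  have "x dvd Polynomial.smult 4 ?q - pderiv ?q * pderiv ?q"
    using sq_dvd_pderiv[OF x] by (metis dvd_diff dvd_smult dvd_mult2)
  also have "Polynomial.smult 4 ?q - pderiv ?q * pderiv ?q = [:-((a-b)^2):]"
    by (simp add: pderiv_pCons pderiv_mult algebra_simps power2_eq_square)
  finally have "x dvd [:-((a-b)^2):]" .
  moreover have "is_unit [:-((a-b)^2):]" using assms by (simp add: is_unit_const_poly_iff dvd_field_iff)
  ultimately show "x dvd 1" using dvd_unit_imp_unit by blast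
qed

lemma order_thing: "group G \<Longrightarrow> finite (carrier G) \<Longrightarrow> g \<in> carrier G \<Longrightarrow> g [^]\<^bsub>G\<^esub> order G = \<one>\<^bsub>G\<^esub> \<and> order G \<ge> 1"
  using group.pow_order_eq_1 
  by (metis One_nat_def Suc_leI card_gt_0_iff empty_iff order_def)




lemma Ef_iff: "a \<in> Ef f \<longleftrightarrow> (\<forall>j. a (j + f) = a j)" by (simp add: Ef_def)
lemma cvec_Ef[simp]: "cvec c \<in> Ef f" by (simp add: Ef_def cvec_def)
lemma Dm_iff: "(a, b) \<in> Dm f \<longleftrightarrow> a \<in> Ef f \<and> b \<in> Ef f" by (simp add: Dm_def)
lemma eta_Dm[simp]: "eta1 \<in> Dm f" "eta2 \<in> Dm f" by (simp_all add: eta1_def eta2_def Dm_def)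
lemma smult_Dm[simp]: "a \<in> Ef f \<Longrightarrow> d \<in> Dm f \<Longrightarrow> smult_d a d \<in> Dm f"
  by (cases d) (simp add: smult_d_def Dm_def Ef_def)
lemma add_Dm[simp]: "d \<in> Dm f \<Longrightarrow> d' \<in> Dm f \<Longrightarrow> add_d d d' \<in> Dm f"
  by (cases d, cases d') (simp add: add_d_def Dm_def Ef_def)
lemma decomp: "((a, b) :: 'e::comm_ring_1 dm) = add_d (smult_d a eta1) (smult_d b eta2)"
  by (simp add: add_d_def smult_d_def eta1_def eta2_def cvec_def)
lemma smult_eta1: "smult_d (cvec a) (eta1 :: 'e::comm_ring_1 dm) = (cvec a, cvec 0)"
  by (simp add: smult_d_def eta1_def cvec_def)
lemma cvec_app[simp]: "cvec c j = c" by (simp add: cvec_def)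
lemma cvec_inj[simp]: "cvec a = cvec b \<longleftrightarrow> a = b" by (metis cvec_app)

lemma matr_eq_mat2:
  assumes "matr T = mat2 A B C D"
  shows "T eta1 = (A, C)" "T eta2 = (B, D)"
proof -
  have "matr T 1 1 = A" "matr T 1 2 = B" "matr T 2 1 = C" "matr T 2 2 = D"
    using assms by (simp_all add: mat2_def)
  thus "T eta1 = (A, C)" "T eta2 = (B, D)" by (simp_all add: matr_def prod_eq_iff)
qed

lemma mat2_of:
  assumes "T eta1 = (A, C)" "T eta2 = (B, D)"
  shows "matr T = mat2 A B C D"
  using assms by (auto simp: matr_def mat2_def fun_eq_iff)

lemma seq_const: "(\<forall>j. u (Suc j) = u j) \<Longrightarrow> u j = u 0"
  by (induct j) auto

lemma seq_geo:
  fixes u :: "nat \<Rightarrow> 'e::field"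
  assumes "\<forall>j. u (Suc j) = r * u j" "\<forall>j. u (j + f) = u j" "r ^ f \<noteq> 1"
  shows "u j = 0"
proof -
  have "u (j + k) = r ^ k * u j" for k by (induct k) (use assms(1) in auto)
  hence "u j = r ^ f * u j" using assms(2) by metis
  hence "(1 - r ^ f) * u j = 0" by (simp add: algebra_simps)
  thus ?thesis using assms(3) by simp
qed

lemma seq_arith:
  fixes u :: "nat \<Rightarrow> 'e::field_char_0"
  assumes "\<forall>j. u (Suc j) = u j + b" "\<forall>j. u (j + f) = u j" "f \<ge> 1"
  shows "b = 0"
proof -
  have "u (j + k) = u j + of_nat k * b" for j k by (induct k) (use assms(1) in \<open>auto simp: algebra_simps\<close>)
  from this[of 0 f] assms(2)[rule_format, of 0] have "of_nat f * b = 0" by simp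
  thus ?thesis using assms(3) by simp
qed

locale pm =
  fixes p f G n and Phi N :: "'e::field_char_0 dm \<Rightarrow> 'e dm" and act
  assumes M: "phiN_mod p f G n Phi N act"
begin

lemma f1: "f \<ge> 1" using M by (simp add: phiN_mod_def)
lemma grp: "group G" using M by (simp add: phiN_mod_def)
lemma fin: "finite (carrier G)" using M by (simp add: phiN_mod_def)
lemma Phi_Dm: "d \<in> Dm f \<Longrightarrow> Phi d \<in> Dm f" using M unfolding phiN_mod_def bij_betw_def by auto
lemma Phi_add: "d \<in> Dm f \<Longrightarrow> d' \<in> Dm f \<Longrightarrow> Phi (add_d d d') = add_d (Phi d) (Phi d')"
  using M by (simp add: phiN_mod_def)
lemma Phi_sm: "a \<in> Ef f \<Longrightarrow> d \<in> Dm f \<Longrightarrow> Phi (smult_d a d) = smult_d (shift 1 a) (Phi d)"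
  using M by (simp add: phiN_mod_def)
lemma N_sm: "a \<in> Ef f \<Longrightarrow> d \<in> Dm f \<Longrightarrow> N (smult_d a d) = smult_d a (N d)"
  using M by (simp add: phiN_mod_def)
lemma act_Dm: "g \<in> carrier G \<Longrightarrow> d \<in> Dm f \<Longrightarrow> act g d \<in> Dm f"
  using M unfolding phiN_mod_def by blast
lemma act_add: "g \<in> carrier G \<Longrightarrow> d \<in> Dm f \<Longrightarrow> d' \<in> Dm f \<Longrightarrow> act g (add_d d d') = add_d (act g d) (act g d')"
  using M by (simp add: phiN_mod_def)
lemma act_c: "g \<in> carrier G \<Longrightarrow> d \<in> Dm f \<Longrightarrow> act g (smult_d (cvec c) d) = smult_d (cvec c) (act g d)"
  using M unfolding phiN_mod_def by blast
lemma act_Phi: "g \<in> carrier G \<Longrightarrow> d \<in> Dm f \<Longrightarrow> act g (Phi d) = Phi (act g d)"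
  using M by (simp add: phiN_mod_def)
lemma act_N: "g \<in> carrier G \<Longrightarrow> d \<in> Dm f \<Longrightarrow> act g (N d) = N (act g d)"
  using M by (simp add: phiN_mod_def)
lemma act_one: "d \<in> Dm f \<Longrightarrow> act \<one>\<^bsub>G\<^esub> d = d"
  using M by (simp add: phiN_mod_def)
lemma act_mult: "g \<in> carrier G \<Longrightarrow> h \<in> carrier G \<Longrightarrow> d \<in> Dm f \<Longrightarrow> act (g \<otimes>\<^bsub>G\<^esub> h) d = act g (act h d)"
  using M by (simp add: phiN_mod_def)

lemma act_cc:
  assumes g: "g \<in> carrier G"
  shows "act g (cvec u, cvec v) = add_d (smult_d (cvec u) (act g eta1)) (smult_d (cvec v) (act g eta2))"
  by (subst decomp) (simp add: act_add act_c g)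

lemma Phi_ef:
  assumes "a \<in> Ef f" "b \<in> Ef f"
  shows "Phi (a, b) = add_d (smult_d (shift 1 a) (Phi eta1)) (smult_d (shift 1 b) (Phi eta2))"
  by (subst decomp) (simp add: Phi_add Phi_sm assms)

lemma act_eqs:
  assumes g: "g \<in> carrier G"
    and P1: "Phi eta1 = (cvec c11, cvec c21)" and P2: "Phi eta2 = (cvec c12, cvec c22)"
  defines "X1 \<equiv> fst (act g eta1)" and "Y1 \<equiv> snd (act g eta1)"
    and "X2 \<equiv> fst (act g eta2)" and "Y2 \<equiv> snd (act g eta2)"
  shows "X1 (Suc j) * c11 + Y1 (Suc j) * c12 = c11 * X1 j + c21 * X2 j"
    "X1 (Suc j) * c21 + Y1 (Suc j) * c22 = c11 * Y1 j + c21 * Y2 j"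
    "X2 (Suc j) * c11 + Y2 (Suc j) * c12 = c12 * X1 j + c22 * X2 j"
    "X2 (Suc j) * c21 + Y2 (Suc j) * c22 = c12 * Y1 j + c22 * Y2 j"
    "X1 \<in> Ef f" "Y1 \<in> Ef f" "X2 \<in> Ef f" "Y2 \<in> Ef f"
proof -
  have a1: "act g eta1 = (X1, Y1)" and a2: "act g eta2 = (X2, Y2)" by (simp_all add: X1_def Y1_def X2_def Y2_def)
  have "act g eta1 \<in> Dm f" "act g eta2 \<in> Dm f" using act_Dm g by auto
  thus e: "X1 \<in> Ef f" "Y1 \<in> Ef f" "X2 \<in> Ef f" "Y2 \<in> Ef f" using a1 a2 by (auto simp: Dm_iff)
  have "act g (Phi eta1) = Phi (act g eta1)" by (simp add: act_Phi g)
  hence E1: "add_d (smult_d (cvec c11) (X1, Y1)) (smult_d (cvec c21) (X2, Y2)) =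
    add_d (smult_d (shift 1 X1) (cvec c11, cvec c21)) (smult_d (shift 1 Y1) (cvec c12, cvec c22))"
    using a1 a2 P1 P2 act_cc[OF g] Phi_ef[OF e(1,2)] by simp
  have "act g (Phi eta2) = Phi (act g eta2)" by (simp add: act_Phi g)
  hence E2: "add_d (smult_d (cvec c12) (X1, Y1)) (smult_d (cvec c22) (X2, Y2)) =
    add_d (smult_d (shift 1 X2) (cvec c11, cvec c21)) (smult_d (shift 1 Y2) (cvec c12, cvec c22))"
    using a1 a2 P1 P2 act_cc[OF g] Phi_ef[OF e(3,4)] by simp
  from E1 show "X1 (Suc j) * c11 + Y1 (Suc j) * c12 = c11 * X1 j + c21 * X2 j"
    "X1 (Suc j) * c21 + Y1 (Suc j) * c22 = c11 * Y1 j + c21 * Y2 j"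
    by (auto simp: add_d_def smult_d_def shift_def fun_eq_iff)
  from E2 show "X2 (Suc j) * c11 + Y2 (Suc j) * c12 = c12 * X1 j + c22 * X2 j"
    "X2 (Suc j) * c21 + Y2 (Suc j) * c22 = c12 * Y1 j + c22 * Y2 j"
    by (auto simp: add_d_def smult_d_def shift_def fun_eq_iff)
qed

end


context pm begin

lemma form1:
  assumes g: "g \<in> carrier G" and nz: "\<alpha> \<noteq> 0" "\<delta> \<noteq> 0" and ne: "\<alpha> ^ f \<noteq> \<delta> ^ f"
    and P: "matr Phi = mat2 (cvec \<alpha>) (cvec 0) (cvec 0) (cvec \<delta>)"
  shows "act g eta1 = (cvec (fst (act g eta1) 0), cvec 0) \<and> act g eta2 = (cvec 0, cvec (snd (act g eta2) 0))"
proof -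
  note P12 = matr_eq_mat2[OF P]
  note E = act_eqs[OF g P12]
  define X1 where "X1 = fst (act g eta1)"
  define Y1 where "Y1 = snd (act g eta1)"
  define X2 where "X2 = fst (act g eta2)"
  define Y2 where "Y2 = snd (act g eta2)"
  have x1: "\<forall>j. X1 (Suc j) = X1 j" using E(1) nz unfolding X1_def by simp
  have y2: "\<forall>j. Y2 (Suc j) = Y2 j" using E(4) nz unfolding Y2_def by simp
  have y1: "\<forall>j. Y1 (Suc j) = (\<alpha> / \<delta>) * Y1 j" using E(2) nz unfolding Y1_def by (simp add: field_simps)
  have x2: "\<forall>j. X2 (Suc j) = (\<delta> / \<alpha>) * X2 j" using E(3) nz unfolding X2_def by (simp add: field_simps)
  have r1: "(\<alpha> / \<delta>) ^ f \<noteq> 1" using ne nz by (simp add: power_divide)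
  have r2: "(\<delta> / \<alpha>) ^ f \<noteq> 1" using ne nz by (simp add: power_divide)
  have "Y1 j = 0" for j using seq_geo[OF y1 _ r1] E(6) unfolding Y1_def Ef_iff by blast
  moreover have "X2 j = 0" for j using seq_geo[OF x2 _ r2] E(7) unfolding X2_def Ef_iff by blast
  moreover have "X1 j = X1 0" for j using seq_const[OF x1] .
  moreover have "Y2 j = Y2 0" for j using seq_const[OF y2] .
  ultimately have "X1 = cvec (X1 0)" "Y1 = cvec 0" "X2 = cvec 0" "Y2 = cvec (Y2 0)" by (auto simp: fun_eq_iff)
  thus ?thesis unfolding X1_def Y1_def X2_def Y2_def by (metis prod.collapse)
qed

lemma form2:
  assumes g: "g \<in> carrier G" and nz: "\<alpha> \<noteq> 0"
    and P: "matr Phi = mat2 (cvec \<alpha>) (cvec 0) (cvec 0) (cvec \<alpha>)"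
  shows "act g eta1 = (cvec (fst (act g eta1) 0), cvec (snd (act g eta1) 0)) \<and>
         act g eta2 = (cvec (fst (act g eta2) 0), cvec (snd (act g eta2) 0))"
proof -
  note P12 = matr_eq_mat2[OF P]
  note E = act_eqs[OF g P12]
  define X1 where "X1 = fst (act g eta1)"
  define Y1 where "Y1 = snd (act g eta1)"
  define X2 where "X2 = fst (act g eta2)"
  define Y2 where "Y2 = snd (act g eta2)"
  have x1: "\<forall>j. X1 (Suc j) = X1 j" using E(1) nz unfolding X1_def by simp
  have y2: "\<forall>j. Y2 (Suc j) = Y2 j" using E(4) nz unfolding Y2_def by simp
  have y1: "\<forall>j. Y1 (Suc j) = Y1 j" using E(2) nz unfolding Y1_def by simp
  have x2: "\<forall>j. X2 (Suc j) = X2 j" using E(3) nz unfolding X2_def by simp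
  have "X1 = cvec (X1 0)" "Y1 = cvec (Y1 0)" "X2 = cvec (X2 0)" "Y2 = cvec (Y2 0)"
    using seq_const[OF x1] seq_const[OF y1] seq_const[OF x2] seq_const[OF y2] by (auto simp: fun_eq_iff)
  thus ?thesis unfolding X1_def Y1_def X2_def Y2_def by (metis prod.collapse)
qed

lemma form3:
  assumes g: "g \<in> carrier G" and nz: "\<alpha> \<noteq> 0"
    and P: "matr Phi = mat2 (cvec \<alpha>) (cvec 0) (cvec 1) (cvec \<alpha>)"
  shows "act g eta1 = (cvec (fst (act g eta1) 0), cvec (snd (act g eta1) 0)) \<and>
         act g eta2 = (cvec 0, cvec (fst (act g eta1) 0))"
proof -
  note P12 = matr_eq_mat2[OF P]
  note E = act_eqs[OF g P12]
  define X1 where "X1 = fst (act g eta1)"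
  define Y1 where "Y1 = snd (act g eta1)"
  define X2 where "X2 = fst (act g eta2)"
  define Y2 where "Y2 = snd (act g eta2)"
  have x2: "\<forall>j. X2 (Suc j) = X2 j" using E(3) nz unfolding X2_def by simp
  hence X2c: "X2 j = X2 0" for j using seq_const by metis
  have x1: "\<forall>j. X1 (Suc j) = X1 j + X2 0 / \<alpha>" using E(1) nz X2c unfolding X1_def X2_def by (simp add: field_simps)
  have "X2 0 / \<alpha> = 0" using seq_arith[OF x1 _ f1] E(5) unfolding X1_def Ef_iff by blast
  hence X20: "X2 j = 0" for j using X2c nz by simp
  have x1': "\<forall>j. X1 (Suc j) = X1 j" using x1 X20 by simp
  hence X1c: "X1 j = X1 0" for j using seq_const by metis
  have y2: "\<forall>j. Y2 (Suc j) = Y2 j" using E(4) nz X20 unfolding Y2_def X2_def by simp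
  hence Y2c: "Y2 j = Y2 0" for j using seq_const by metis
  have y1: "\<forall>j. Y1 (Suc j) = Y1 j + (Y2 0 - X1 0) / \<alpha>"
  proof
    fix j
    have "X1 (Suc j) + \<alpha> * Y1 (Suc j) = Y2 j + \<alpha> * Y1 j" using E(2) unfolding X1_def Y1_def Y2_def by (simp add: algebra_simps)
    hence "X1 0 + \<alpha> * Y1 (Suc j) = Y2 0 + \<alpha> * Y1 j" using X1c Y2c by metis
    thus "Y1 (Suc j) = Y1 j + (Y2 0 - X1 0) / \<alpha>" using nz by (simp add: field_simps)
  qed
  have "(Y2 0 - X1 0) / \<alpha> = 0" using seq_arith[OF y1 _ f1] E(6) unfolding Y1_def Ef_iff by blast
  hence yx: "Y2 0 = X1 0" using nz by simp
  have "\<forall>j. Y1 (Suc j) = Y1 j" using y1 yx by simp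
  hence Y1c: "Y1 j = Y1 0" for j using seq_const by metis
  have "X1 = cvec (X1 0)" "Y1 = cvec (Y1 0)" "X2 = cvec 0" "Y2 = cvec (X1 0)"
    using X1c Y1c X20 Y2c yx by (auto simp: fun_eq_iff)
  thus ?thesis unfolding X1_def Y1_def X2_def Y2_def by (metis prod.collapse)
qed

end



definition Lm :: "('g \<Rightarrow> 'e::field dm \<Rightarrow> 'e dm) \<Rightarrow> 'g \<Rightarrow> nat \<Rightarrow> nat \<Rightarrow> 'e" where
  "Lm act g r s = (if r = 1 then fst else snd) (act g (if s = 1 then eta1 else eta2)) 0"

lemma det_mult:
  fixes a11 a12 a21 a22 b11 b12 b21 b22 :: "'a::comm_ring_1"
  shows "(a11*a22 - a12*a21)*(b11*b22-b12*b21) = (a11*b11+a12*b21)*(a21*b12+a22*b22) - (a11*b12+a12*b22)*(a21*b11+a22*b21)"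
  by (simp add: algebra_simps)

context pm begin

definition constg where
  "constg g \<longleftrightarrow> act g eta1 = (cvec (Lm act g 1 1), cvec (Lm act g 2 1)) \<and>
                act g eta2 = (cvec (Lm act g 1 2), cvec (Lm act g 2 2))"

lemma constg_I: "act g eta1 = (cvec a, cvec c) \<Longrightarrow> act g eta2 = (cvec b, cvec d) \<Longrightarrow> constg g"
  by (simp add: constg_def Lm_def)

lemma L_mult:
  assumes C: "\<forall>g\<in>carrier G. constg g" and g: "g \<in> carrier G" and h: "h \<in> carrier G"
    and that: "r \<in> {1,2}" "s \<in> {1,2}"
  shows "Lm act (g \<otimes>\<^bsub>G\<^esub> h) r s = Lm act g r 1 * Lm act h 1 s + Lm act g r 2 * Lm act h 2 s"
proof -
  have Cg: "constg g" and Ch: "constg h" using C g h by auto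
  have e1: "act (g \<otimes>\<^bsub>G\<^esub> h) eta1 = add_d (smult_d (cvec (Lm act h 1 1)) (act g eta1)) (smult_d (cvec (Lm act h 2 1)) (act g eta2))"
    using act_mult[OF g h, of eta1] Ch act_cc[OF g] unfolding constg_def by simp
  have e2: "act (g \<otimes>\<^bsub>G\<^esub> h) eta2 = add_d (smult_d (cvec (Lm act h 1 2)) (act g eta1)) (smult_d (cvec (Lm act h 2 2)) (act g eta2))"
    using act_mult[OF g h, of eta2] Ch act_cc[OF g] unfolding constg_def by simp
  show ?thesis using that Cg e1 e2 unfolding constg_def
    by (auto simp: Lm_def add_d_def smult_d_def algebra_simps)
qed

lemma L_one:
  "Lm act \<one>\<^bsub>G\<^esub> 1 1 = 1" "Lm act \<one>\<^bsub>G\<^esub> 1 2 = 0" "Lm act \<one>\<^bsub>G\<^esub> 2 1 = 0" "Lm act \<one>\<^bsub>G\<^esub> 2 2 = 1"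
  unfolding Lm_def using act_one[OF eta_Dm(1)] act_one[OF eta_Dm(2)] by (simp_all add: eta1_def eta2_def)

lemma det_nz:
  assumes C: "\<forall>g\<in>carrier G. constg g" and g: "g \<in> carrier G"
  shows "Lm act g 1 1 * Lm act g 2 2 - Lm act g 1 2 * Lm act g 2 1 \<noteq> 0"
proof -
  interpret G: group G by (rule grp)
  have ig: "inv\<^bsub>G\<^esub> g \<in> carrier G" using g by simp
  have gi: "g \<otimes>\<^bsub>G\<^esub> inv\<^bsub>G\<^esub> g = \<one>\<^bsub>G\<^esub>" using g by simp
  note LM = L_mult[OF C g ig]
  let ?i = "inv\<^bsub>G\<^esub> g"
  have h1: "Lm act g 1 1 * Lm act ?i 1 1 + Lm act g 1 2 * Lm act ?i 2 1 = 1"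
    using LM[of 1 1] L_one gi by simp
  have h2: "Lm act g 1 1 * Lm act ?i 1 2 + Lm act g 1 2 * Lm act ?i 2 2 = 0"
    using LM[of 1 2] L_one gi by simp
  have h3: "Lm act g 2 1 * Lm act ?i 1 1 + Lm act g 2 2 * Lm act ?i 2 1 = 0"
    using LM[of 2 1] L_one gi by simp
  have h4: "Lm act g 2 1 * Lm act ?i 1 2 + Lm act g 2 2 * Lm act ?i 2 2 = 1"
    using LM[of 2 2] L_one gi by simp
  have "(Lm act g 1 1 * Lm act g 2 2 - Lm act g 1 2 * Lm act g 2 1) *
     (Lm act ?i 1 1 * Lm act ?i 2 2 - Lm act ?i 1 2 * Lm act ?i 2 1) = 1"
    unfolding det_mult h1 h2 h3 h4 by simp
  thus ?thesis by auto
qed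

lemma GL2:
  assumes C: "\<forall>g\<in>carrier G. constg g"
  shows "is_GL2_hom G (Lm act)"
  unfolding is_GL2_hom_def using det_nz[OF C] L_mult[OF C] by simp

lemma matr_L:
  assumes "constg g"
  shows "matr (act g) = mat2 (cvec (Lm act g 1 1)) (cvec (Lm act g 1 2)) (cvec (Lm act g 2 1)) (cvec (Lm act g 2 2))"
  using assms unfolding constg_def by (intro mat2_of) auto

lemma char_diag:
  assumes C: "\<forall>g\<in>carrier G. constg g" and D: "\<forall>g\<in>carrier G. Lm act g 1 2 = 0 \<and> Lm act g 2 1 = 0"
  shows "is_character G (\<lambda>g. Lm act g 1 1)" "is_character G (\<lambda>g. Lm act g 2 2)"
  unfolding is_character_def using det_nz[OF C] L_mult[OF C] D by auto

lemma form3_diag: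
  assumes C: "\<forall>g\<in>carrier G. constg g"
    and F: "\<forall>g\<in>carrier G. Lm act g 1 2 = 0 \<and> Lm act g 2 2 = Lm act g 1 1"
    and g: "g \<in> carrier G"
  shows "Lm act g 2 1 = 0"
proof -
  interpret G: group G by (rule grp)
  define a where "a = Lm act g 1 1"
  define c where "c = Lm act g 2 1"
  have P: "Lm act (g [^]\<^bsub>G\<^esub> k) 1 1 = a ^ k \<and> a * Lm act (g [^]\<^bsub>G\<^esub> k) 2 1 = of_nat k * a ^ k * c" for k :: nat
  proof (induct k)
    case 0 thus ?case using L_one by simp
  next
    case (Suc k)
    have gk: "g [^]\<^bsub>G\<^esub> k \<in> carrier G" using g by simp
    have s: "g [^]\<^bsub>G\<^esub> Suc k = g [^]\<^bsub>G\<^esub> k \<otimes>\<^bsub>G\<^esub> g" by simp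
    note LM = L_mult[OF C gk g]
    have "Lm act (g [^]\<^bsub>G\<^esub> Suc k) 1 1 = a ^ Suc k" using LM[of 1 1] F gk Suc a_def s by simp
    moreover have "Lm act (g [^]\<^bsub>G\<^esub> Suc k) 2 1 = Lm act (g [^]\<^bsub>G\<^esub> k) 2 1 * a + a ^ k * c"
      using LM[of 2 1] F gk g Suc a_def c_def s by simp
    hence "a * Lm act (g [^]\<^bsub>G\<^esub> Suc k) 2 1 = of_nat (Suc k) * a ^ Suc k * c"
      using Suc by (simp add: algebra_simps)
    ultimately show ?case by simp
  qed
  have o: "g [^]\<^bsub>G\<^esub> order G = \<one>\<^bsub>G\<^esub>" "order G \<ge> 1" using order_thing[OF grp fin g] by auto
  from P[of "order G"] o(1) L_one have "a ^ order G = 1" "0 = of_nat (order G) * a ^ order G * c" by auto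
  thus ?thesis using o(2) c_def by simp
qed

lemma Phi_pow:
  assumes P: "matr Phi = mat2 (cvec \<alpha>) (cvec 0) (cvec 0) (cvec \<delta>)" and d: "(a, b) \<in> Dm f"
  shows "(Phi ^^ k) (a, b) = (\<lambda>j. \<alpha> ^ k * a (j + k), \<lambda>j. \<delta> ^ k * b (j + k))"
proof (induct k)
  case 0 thus ?case by simp
next
  case (Suc k)
  have A: "(\<lambda>j. \<alpha> ^ k * a (j + k)) \<in> Ef f" "(\<lambda>j. \<delta> ^ k * b (j + k)) \<in> Ef f"
    using d by (auto simp: Dm_iff Ef_iff) (metis add.assoc add.commute)+
  show ?case using Suc Phi_ef[OF A] matr_eq_mat2[OF P]
    by (simp add: add_d_def smult_d_def shift_def algebra_simps)
qed

lemma Phi_f_pow: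
  assumes P: "matr Phi = mat2 (cvec \<alpha>) (cvec 0) (cvec 0) (cvec \<delta>)" and d: "(a, b) \<in> Dm f"
  shows "((Phi ^^ f) ^^ i) (a, b) = (\<lambda>j. (\<alpha> ^ f) ^ i * a j, \<lambda>j. (\<delta> ^ f) ^ i * b j)"
proof (induct i)
  case 0 thus ?case by simp
next
  case (Suc i)
  have A: "((\<lambda>j. (\<alpha> ^ f) ^ i * a j), (\<lambda>j. (\<delta> ^ f) ^ i * b j)) \<in> Dm f"
    using d by (auto simp: Dm_iff Ef_iff)
  have Ea: "a (j + f) = a j" "b (j + f) = b j" for j using d by (auto simp: Dm_iff Ef_iff)
  show ?case using Suc Phi_pow[OF P A, of f] Ea by (simp add: algebra_simps)
qed

lemma op_poly_diag:
  assumes P: "matr Phi = mat2 (cvec \<alpha>) (cvec 0) (cvec 0) (cvec \<delta>)" and d: "(a, b) \<in> Dm f"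
  shows "op_poly q (Phi ^^ f) (a, b) = (\<lambda>j. poly q (\<alpha> ^ f) * a j, \<lambda>j. poly q (\<delta> ^ f) * b j)"
  unfolding op_poly_def Phi_f_pow[OF P d] poly_altdef by (simp add: sum_distrib_right sum_distrib_left algebra_simps)

lemma form2_scalar:
  assumes nz: "\<alpha> \<noteq> 0" and P: "matr Phi = mat2 (cvec \<alpha>) (cvec 0) (cvec 0) (cvec \<alpha>)"
  shows "F_scalar f Phi"
  unfolding F_scalar_def
proof (intro exI conjI ballI)
  show "\<alpha> ^ f \<noteq> 0" using nz by simp
  fix d :: "'e dm" assume d: "d \<in> Dm f"
  obtain a b where ab: "d = (a, b)" by fastforce
  show "(Phi ^^ f) d = smult_d (cvec (\<alpha> ^ f)) d"
    using Phi_f_pow[OF P d[unfolded ab], of 1] ab by (simp add: smult_d_def)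
qed

lemma diag_ss:
  assumes P: "matr Phi = mat2 (cvec \<alpha>) (cvec 0) (cvec 0) (cvec \<delta>)"
  shows "F_semisimple f Phi"
proof (cases "\<alpha> ^ f = \<delta> ^ f")
  case True
  show ?thesis unfolding F_semisimple_def
  proof (intro exI conjI ballI)
    show "[:-(\<alpha> ^ f), 1:] \<noteq> 0" by simp
    show "squarefree [:-(\<alpha> ^ f), 1:]" by (rule lin_sqf)
    fix d :: "'e dm" assume d: "d \<in> Dm f"
    obtain a b where ab: "d = (a, b)" by fastforce
    show "op_poly [:-(\<alpha> ^ f), 1:] (Phi ^^ f) d = zero_d"
      using op_poly_diag[OF P d[unfolded ab]] ab True by (simp add: zero_d_def cvec_def)
  qed
next
  case False
  show ?thesis unfolding F_semisimple_def
  proof (intro exI conjI ballI)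
    show "[:-(\<alpha> ^ f), 1:] * [:-(\<delta> ^ f), 1:] \<noteq> 0" by simp
    show "squarefree ([:-(\<alpha> ^ f), 1:] * [:-(\<delta> ^ f), 1:])" by (rule two_sqf[OF False])
    fix d :: "'e dm" assume d: "d \<in> Dm f"
    obtain a b where ab: "d = (a, b)" by fastforce
    show "op_poly ([:-(\<alpha> ^ f), 1:] * [:-(\<delta> ^ f), 1:]) (Phi ^^ f) d = zero_d"
      using op_poly_diag[OF P d[unfolded ab]] ab by (simp add: zero_d_def cvec_def)
  qed
qed

end


context pm begin

lemma res1:
  assumes nz: "\<alpha> \<noteq> 0" "\<delta> \<noteq> 0" and ne: "\<alpha> ^ f \<noteq> \<delta> ^ f"
    and P: "matr Phi = mat2 (cvec \<alpha>) (cvec 0) (cvec 0) (cvec \<delta>)"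
  shows "\<forall>g\<in>carrier G. constg g" "\<forall>g\<in>carrier G. Lm act g 1 2 = 0 \<and> Lm act g 2 1 = 0"
proof -
  have F: "\<exists>x y. act g eta1 = (cvec x, cvec 0) \<and> act g eta2 = (cvec 0, cvec y)"
    if "g \<in> carrier G" for g using form1[OF that nz ne P] by blast
  show "\<forall>g\<in>carrier G. constg g"
  proof
    fix g assume g: "g \<in> carrier G"
    then obtain x y where "act g eta1 = (cvec x, cvec 0)" "act g eta2 = (cvec 0, cvec y)" using F by blast
    thus "constg g" by (rule constg_I)
  qed
  show "\<forall>g\<in>carrier G. Lm act g 1 2 = 0 \<and> Lm act g 2 1 = 0"
  proof
    fix g assume g: "g \<in> carrier G"
    then obtain x y where "act g eta1 = (cvec x, cvec 0)" "act g eta2 = (cvec 0, cvec y)" using F by blast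
    thus "Lm act g 1 2 = 0 \<and> Lm act g 2 1 = 0" unfolding Lm_def by simp
  qed
qed

lemma res2:
  assumes nz: "\<alpha> \<noteq> 0" and P: "matr Phi = mat2 (cvec \<alpha>) (cvec 0) (cvec 0) (cvec \<alpha>)"
  shows "\<forall>g\<in>carrier G. constg g"
proof
  fix g assume g: "g \<in> carrier G"
  have "\<exists>x y z w. act g eta1 = (cvec x, cvec y) \<and> act g eta2 = (cvec z, cvec w)"
    using form2[OF g nz P] by blast
  then obtain x y z w where "act g eta1 = (cvec x, cvec y)" "act g eta2 = (cvec z, cvec w)" by blast
  thus "constg g" by (rule constg_I)
qed

lemma res3:
  assumes nz: "\<alpha> \<noteq> 0" and P: "matr Phi = mat2 (cvec \<alpha>) (cvec 0) (cvec 1) (cvec \<alpha>)"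
  shows "\<forall>g\<in>carrier G. constg g" "\<forall>g\<in>carrier G. Lm act g 1 2 = 0 \<and> Lm act g 2 1 = 0 \<and> Lm act g 2 2 = Lm act g 1 1"
proof -
  have F: "\<exists>x y. act g eta1 = (cvec x, cvec y) \<and> act g eta2 = (cvec 0, cvec x)"
    if "g \<in> carrier G" for g using form3[OF that nz P] by blast
  show C: "\<forall>g\<in>carrier G. constg g"
  proof
    fix g assume g: "g \<in> carrier G"
    then obtain x y where "act g eta1 = (cvec x, cvec y)" "act g eta2 = (cvec 0, cvec x)" using F by blast
    thus "constg g" by (rule constg_I)
  qed
  have F2: "\<forall>g\<in>carrier G. Lm act g 1 2 = 0 \<and> Lm act g 2 2 = Lm act g 1 1"
  proof
    fix g assume g: "g \<in> carrier G"
    then obtain x y where "act g eta1 = (cvec x, cvec y)" "act g eta2 = (cvec 0, cvec x)" using F by blast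
    thus "Lm act g 1 2 = 0 \<and> Lm act g 2 2 = Lm act g 1 1" unfolding Lm_def by simp
  qed
  show "\<forall>g\<in>carrier G. Lm act g 1 2 = 0 \<and> Lm act g 2 1 = 0 \<and> Lm act g 2 2 = Lm act g 1 1"
    using form3_diag[OF C F2] F2 by blast
qed

lemma resN:
  assumes C: "\<forall>g\<in>carrier G. constg g" and D: "\<forall>g\<in>carrier G. Lm act g 1 2 = 0 \<and> Lm act g 2 1 = 0"
    and NM: "matr N = mat2 (cvec 0) (cvec 0) (cvec 1) (cvec 0)" and g: "g \<in> carrier G"
  shows "Lm act g 2 2 = Lm act g 1 1"
proof -
  note NN = matr_eq_mat2[OF NM]
  have Cg: "act g eta1 = (cvec (Lm act g 1 1), cvec 0)" "act g eta2 = (cvec 0, cvec (Lm act g 2 2))"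
    using C D g unfolding constg_def by auto
  have "act g (N eta1) = N (act g eta1)" using act_N[OF g] by simp
  also have "N (act g eta1) = N (smult_d (cvec (Lm act g 1 1)) eta1)" by (simp only: Cg smult_eta1)
  also have "\<dots> = smult_d (cvec (Lm act g 1 1)) (N eta1)" using N_sm by simp
  finally have "act g (cvec 0, cvec 1) = smult_d (cvec (Lm act g 1 1)) (cvec 0, cvec 1)" using NN by simp
  moreover have "(cvec 0, cvec 1) = (eta2 :: 'e dm)" by (simp add: eta2_def)
  ultimately have "(cvec 0, cvec (Lm act g 2 2)) = smult_d (cvec (Lm act g 1 1)) (cvec 0, cvec 1)" using Cg by simp
  thus ?thesis by (simp add: smult_d_def fun_eq_iff)
qed

end

theorem proposition2p7:
  fixes p f :: nat and G :: "('g, 'b) monoid_scheme" and n :: "'g \<Rightarrow> nat"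
    and Phi N :: "'e::field_char_0 dm \<Rightarrow> 'e dm" and act :: "'g \<Rightarrow> 'e dm \<Rightarrow> 'e dm"
  assumes "prime p"
    and "phiN_mod p f G n Phi N act"
    and "std_basis p f Phi N"
  shows "(F_semisimple f Phi \<and> \<not> F_scalar f Phi \<longrightarrow>
            (N_nonzero f N \<longrightarrow>
               (\<exists>\<chi>. is_character G \<chi> \<and>
                  (\<forall>g\<in>carrier G. matr (act g) = mat2 (cvec (\<chi> g)) (cvec 0) (cvec 0) (cvec (\<chi> g))))) \<and>
            (\<not> N_nonzero f N \<longrightarrow>
               (\<exists>\<chi> \<psi>. is_character G \<chi> \<and> is_character G \<psi> \<and>
                  (\<forall>g\<in>carrier G. matr (act g) = mat2 (cvec (\<chi> g)) (cvec 0) (cvec 0) (cvec (\<psi> g))))))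
       \<and> (F_scalar f Phi \<longrightarrow>
            (\<exists>L. is_GL2_hom G L \<and>
               (\<forall>g\<in>carrier G. matr (act g) =
                  mat2 (cvec (L g 1 1)) (cvec (L g 1 2)) (cvec (L g 2 1)) (cvec (L g 2 2)))))
       \<and> (\<not> F_semisimple f Phi \<longrightarrow>
            (\<exists>\<chi>. is_character G \<chi> \<and>
               (\<forall>g\<in>carrier G. matr (act g) = mat2 (cvec (\<chi> g)) (cvec 0) (cvec 0) (cvec (\<chi> g)))))"
proof -
  interpret pm p f G n Phi N act using assms(2) by (rule pm.intro)
  have SB: "(\<exists>\<alpha> \<delta>. \<alpha> \<noteq> 0 \<and> \<delta> \<noteq> 0 \<and> \<alpha> ^ f \<noteq> \<delta> ^ f \<and>
          matr Phi = mat2 (cvec \<alpha>) (cvec 0) (cvec 0) (cvec \<delta>)) \<or>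
      (\<exists>\<alpha>. \<alpha> \<noteq> 0 \<and> matr Phi = mat2 (cvec \<alpha>) (cvec 0) (cvec 0) (cvec \<alpha>)) \<or>
      (\<exists>\<alpha>. \<alpha> \<noteq> 0 \<and> matr Phi = mat2 (cvec \<alpha>) (cvec 0) (cvec 1) (cvec \<alpha>))"
    and NZ: "N_nonzero f N \<longrightarrow>
        (\<exists>\<delta>. \<delta> \<noteq> 0 \<and> matr Phi = mat2 (cvec (of_nat p * \<delta>)) (cvec 0) (cvec 0) (cvec \<delta>) \<and>
              matr N = mat2 (cvec 0) (cvec 0) (cvec 1) (cvec 0))"
    using assms(3) unfolding std_basis_def by blast+
  have diagL: "\<forall>g\<in>carrier G. matr (act g) = mat2 (cvec (Lm act g 1 1)) (cvec 0) (cvec 0) (cvec (Lm act g 2 2))"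
    if C: "\<forall>g\<in>carrier G. constg g" and D: "\<forall>g\<in>carrier G. Lm act g 1 2 = 0 \<and> Lm act g 2 1 = 0"
  proof
    fix g assume g: "g \<in> carrier G"
    show "matr (act g) = mat2 (cvec (Lm act g 1 1)) (cvec 0) (cvec 0) (cvec (Lm act g 2 2))"
      using matr_L[of g] C D g by simp
  qed
  have C: "\<forall>g\<in>carrier G. constg g" using SB res1(1) res2 res3(1) by blast
  have P2: "F_scalar f Phi \<longrightarrow>
            (\<exists>L. is_GL2_hom G L \<and>
               (\<forall>g\<in>carrier G. matr (act g) =
                  mat2 (cvec (L g 1 1)) (cvec (L g 1 2)) (cvec (L g 2 1)) (cvec (L g 2 2))))"
    using GL2[OF C] matr_L C by blast
  have P3: "\<not> F_semisimple f Phi \<longrightarrow>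
            (\<exists>\<chi>. is_character G \<chi> \<and>
               (\<forall>g\<in>carrier G. matr (act g) = mat2 (cvec (\<chi> g)) (cvec 0) (cvec 0) (cvec (\<chi> g))))"
  proof
    assume nss: "\<not> F_semisimple f Phi"
    then obtain \<alpha> where a: "\<alpha> \<noteq> 0" "matr Phi = mat2 (cvec \<alpha>) (cvec 0) (cvec 1) (cvec \<alpha>)"
      using SB diag_ss by blast
    note R = res3[OF a]
    have D: "\<forall>g\<in>carrier G. Lm act g 1 2 = 0 \<and> Lm act g 2 1 = 0" using R(2) by blast
    show "\<exists>\<chi>. is_character G \<chi> \<and>
               (\<forall>g\<in>carrier G. matr (act g) = mat2 (cvec (\<chi> g)) (cvec 0) (cvec 0) (cvec (\<chi> g)))"
      using char_diag(1)[OF C D] diagL[OF C D] R(2) by (intro exI[of _ "\<lambda>g. Lm act g 1 1"]) auto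
  qed
  have P1a: "N_nonzero f N \<longrightarrow>
               (\<exists>\<chi>. is_character G \<chi> \<and>
                  (\<forall>g\<in>carrier G. matr (act g) = mat2 (cvec (\<chi> g)) (cvec 0) (cvec 0) (cvec (\<chi> g))))"
  proof
    assume "N_nonzero f N"
    then obtain \<delta> where d: "\<delta> \<noteq> 0" "matr Phi = mat2 (cvec (of_nat p * \<delta>)) (cvec 0) (cvec 0) (cvec \<delta>)"
      and NM: "matr N = mat2 (cvec 0) (cvec 0) (cvec 1) (cvec 0)" using NZ by blast
    have p2: "p \<ge> 2" using assms(1) by (simp add: prime_ge_2_nat)
    have "p \<le> p ^ f" using p2 f1 by (intro self_le_power) auto
    hence pf: "p ^ f \<noteq> 1" using p2 by linarith
    have ne: "(of_nat p * \<delta>) ^ f \<noteq> \<delta> ^ f"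
    proof
      assume eq: "(of_nat p * \<delta>) ^ f = \<delta> ^ f"
      have "of_nat (p ^ f) * \<delta> ^ f = 1 * \<delta> ^ f" using eq by (simp add: power_mult_distrib)
      hence "(of_nat (p ^ f) :: 'e) = 1" using d(1) by (metis mult_cancel_right power_not_zero)
      thus False using pf by (metis of_nat_eq_1_iff)
    qed
    have pd: "of_nat p * \<delta> \<noteq> 0" using d(1) p2 by simp
    note R = res1[OF pd d(1) ne d(2)]
    have E: "\<forall>g\<in>carrier G. Lm act g 2 2 = Lm act g 1 1" using resN[OF R NM] by blast
    show "\<exists>\<chi>. is_character G \<chi> \<and>
                  (\<forall>g\<in>carrier G. matr (act g) = mat2 (cvec (\<chi> g)) (cvec 0) (cvec 0) (cvec (\<chi> g)))"
      using char_diag(1)[OF R] diagL[OF R] E by (intro exI[of _ "\<lambda>g. Lm act g 1 1"]) auto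
  qed
  have P1b: "F_semisimple f Phi \<and> \<not> F_scalar f Phi \<longrightarrow> \<not> N_nonzero f N \<longrightarrow>
               (\<exists>\<chi> \<psi>. is_character G \<chi> \<and> is_character G \<psi> \<and>
                  (\<forall>g\<in>carrier G. matr (act g) = mat2 (cvec (\<chi> g)) (cvec 0) (cvec 0) (cvec (\<psi> g))))"
  proof (intro impI)
    assume H: "F_semisimple f Phi \<and> \<not> F_scalar f Phi"
    from SB show "\<exists>\<chi> \<psi>. is_character G \<chi> \<and> is_character G \<psi> \<and>
                  (\<forall>g\<in>carrier G. matr (act g) = mat2 (cvec (\<chi> g)) (cvec 0) (cvec 0) (cvec (\<psi> g)))"
    proof (elim disjE exE conjE)
      fix \<alpha> \<delta> assume a: "\<alpha> \<noteq> 0" "\<delta> \<noteq> 0" "\<alpha> ^ f \<noteq> \<delta> ^ f"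
        "matr Phi = mat2 (cvec \<alpha>) (cvec 0) (cvec 0) (cvec \<delta>)"
      note R = res1[OF a]
      show ?thesis using char_diag[OF R] diagL[OF R] by blast
    next
      fix \<alpha> assume a: "\<alpha> \<noteq> 0" "matr Phi = mat2 (cvec \<alpha>) (cvec 0) (cvec 0) (cvec \<alpha>)"
      thus ?thesis using form2_scalar H by blast
    next
      fix \<alpha> assume a: "\<alpha> \<noteq> 0" "matr Phi = mat2 (cvec \<alpha>) (cvec 0) (cvec 1) (cvec \<alpha>)"
      note R = res3[OF a]
      have D: "\<forall>g\<in>carrier G. Lm act g 1 2 = 0 \<and> Lm act g 2 1 = 0" using R(2) by blast
      show ?thesis using char_diag[OF C D] diagL[OF C D] by blast
    qed
  qed
  show ?thesis using P1a P1b P2 P3 by blast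
qed


end
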